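(* Let $1\le W<d<\infty$ be integers, let $a_{ij}\in\mathbb R$ ($1\le i\le d$, $1\le j\le W$) be arbitrary constants, and let $\Phi:\mathbb R^W\to\mathbb R^d$ be given by $\Phi_i(\mathbf w)=\sin\big(\sum_{j=1}^W a_{ij}w_j\big)$, $i=1,\ldots,d$. Then, regardless of the constants $a_{ij}$, the set $F_\Phi$ of GF-learnable targets has Lebesgue measure $0$ in $\mathbb R^d$.
   Context: For a target $\mathbf f\in\mathbb R^d$, let $L_{\mathbf f}(\mathbf w)=\frac12\|\mathbf f-\Phi(\mathbf w)\|^2$ and let $\mathbf w(t)$, $t\ge0$, be the solution of the gradient flow $\frac{d\mathbf w}{dt}=-\nabla_{\mathbf w}L_{\mathbf f}(\mathbf w(t))$ with $\mathbf w(0)=\mathbf 0$. The set of GF-learnable targets is $F_\Phi=\{\mathbf f\in\mathbb R^d:\inf_{t\ge0}L_{\mathbf f}(\mathbf w(t))=0\}$. *)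

theory Defs
  imports "HOL-Analysis.Analysis"
begin

definition loss :: "('w \<Rightarrow> 'd::real_inner) \<Rightarrow> 'd \<Rightarrow> 'w \<Rightarrow> real" where
  "loss Phi f w = (1/2) * (norm (f - Phi w))\<^sup>2"

definition is_gradient :: "('a::real_inner \<Rightarrow> real) \<Rightarrow> 'a \<Rightarrow> 'a \<Rightarrow> bool" where
  "is_gradient g G x \<longleftrightarrow> (g has_derivative (\<lambda>h. G \<bullet> h)) (at x)"

definition gf_solution :: "('w::real_inner \<Rightarrow> 'd::real_inner) \<Rightarrow> 'd \<Rightarrow> (real \<Rightarrow> 'w) \<Rightarrow> bool" where
  "gf_solution Phi f w \<longleftrightarrow> w 0 = 0 \<and>
     (\<forall>t\<ge>0. \<exists>G. is_gradient (loss Phi f) G (w t) \<and>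
                  (w has_vector_derivative (- G)) (at t within {0..}))"

definition GF_learnable :: "('w::real_inner \<Rightarrow> 'd::real_inner) \<Rightarrow> 'd set" where
  "GF_learnable Phi = {f. \<exists>w. gf_solution Phi f w \<and> (INF t\<in>{0..}. loss Phi f (w t)) = 0}"

definition sin_model :: "real^'w^'d \<Rightarrow> real^'w \<Rightarrow> real^'d" where
  "sin_model a w = (\<chi> i. sin (\<Sum>j\<in>UNIV. a $ i $ j * w $ j))"

end

theory Submission
  imports Defs
begin


lemma sin_shift_int: "sin (x + 2 * pi  * of_int k) = sin x"
  by (simp add: sin_add)

lemma sin_cont_bounded:
  fixes v :: "real \<Rightarrow> real"
  assumes cont: "continuous_on {T..} v" and close: "\<forall>t\<ge>T. \<bar>sin (v t) - c\<bar> < 1"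
  shows "\<forall>t\<ge>T. \<bar>v t\<bar> \<le> \<bar>v T\<bar> + 2*pi"
proof -
  define x0 where "x0 = (if c \<ge> 0 then -pi/2 else pi/2)"
  have far: "\<bar>sin x0 - c\<bar> \<ge> 1" by (simp add: x0_def)
  define k where "k = \<lceil>(v T - x0) / (2*pi)\<rceil>"
  define y where "y = x0 + 2 * pi  * of_int k"
  have siny: "sin y = sin x0" unfolding y_def by (rule sin_shift_int)
  have y1: "v T \<le> y"
  proof -
    have "(v T - x0) / (2*pi) \<le> of_int k" unfolding k_def by simp
    then have "v T - x0 \<le> 2*pi * of_int k" by (simp add: divide_le_eq mult.commute)
    then show ?thesis unfolding y_def by simp
  qed
  have y2: "y < v T + 2*pi"
  proof -
    have "of_int k < (v T - x0) / (2*pi) + 1" unfolding k_def by linarith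
    then have "2*pi * of_int k < 2*pi*((v T - x0) / (2*pi) + 1)" by simp
    also have "\<dots> = v T - x0 + 2*pi" by (simp add: field_simps)
    finally show ?thesis unfolding y_def by simp
  qed
  define k' where "k' = \<lfloor>(v T - x0) / (2*pi)\<rfloor>"
  define y' where "y' = x0 + 2 * pi  * of_int k'"
  have siny': "sin y' = sin x0" unfolding y'_def by (rule sin_shift_int)
  have y1': "y' \<le> v T"
  proof -
    have "of_int k' \<le> (v T - x0) / (2*pi)" unfolding k'_def by simp
    then have "2*pi * of_int k' \<le> v T - x0" by (simp add: le_divide_eq mult.commute)
    then show ?thesis unfolding y'_def by simp
  qed
  have y2': "v T - 2*pi < y'"
  proof -
    have "(v T - x0) / (2*pi) - 1 < of_int k'" unfolding k'_def by linarith
    then have "2*pi*((v T - x0) / (2*pi) - 1) < 2*pi * of_int k'" by simp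
    moreover have "2*pi*((v T - x0) / (2*pi) - 1) = v T - x0 - 2*pi" by (simp add: field_simps)
    ultimately show ?thesis unfolding y'_def by simp
  qed
  show ?thesis
  proof (intro allI impI)
    fix t assume t: "T \<le> t"
    have c2: "continuous_on {T..t} v" using continuous_on_subset[OF cont] by auto
    have up: "v t \<le> v T + 2*pi"
    proof (rule ccontr)
      assume "\<not> ?thesis"
      then obtain s where s: "T \<le> s" "s \<le> t" "v s = y"
        using IVT'[of v T y t, OF _ _ t c2] y1 y2 by auto
      then show False using close far siny by auto
    qed
    have down: "v T - 2*pi \<le> v t"
    proof (rule ccontr)
      assume "\<not> ?thesis"
      then obtain s where s: "T \<le> s" "s \<le> t" "v s = y'"
        using IVT2'[of v t y' T, OF _ _ t c2] y1' y2' by auto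
      then show False using close far siny' by auto
    qed
    show "\<bar>v t\<bar> \<le> \<bar>v T\<bar> + 2*pi" using up down by linarith
  qed
qed

lemma gf_monotone:
  fixes Phi :: "'w::real_inner \<Rightarrow> 'd::real_inner"
  assumes gf: "gf_solution Phi f w" and st: "0 < s" "s \<le> t"
  shows "loss Phi f (w t) \<le> loss Phi f (w s)"
proof -
  have "\<exists>y. ((\<lambda>t. loss Phi f (w t)) has_real_derivative y) (at x) \<and> y \<le> 0"
    if x: "s \<le> x" "x \<le> t" for x
  proof -
    have x0: "x \<ge> 0" using x st by simp
    obtain G where G: "is_gradient (loss Phi f) G (w x)"
      "(w has_vector_derivative (- G)) (at x within {0..})"
      using gf x0 unfolding gf_solution_def by blast
    have "(w has_vector_derivative (- G)) (at x within {0<..})"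
      by (rule has_vector_derivative_within_subset[OF G(2)]) (auto simp: subset_eq)
    then have wd: "(w has_vector_derivative (- G)) (at x)"
      using at_within_open[of x "{0<..}"] x st by simp
    have ld: "(loss Phi f has_derivative (\<lambda>h. G \<bullet> h)) (at (w x))"
      using G(1) unfolding is_gradient_def by simp
    have ch: "((loss Phi f \<circ> w) has_derivative ((\<lambda>h. G \<bullet> h) \<circ> (\<lambda>h. h *\<^sub>R (- G)))) (at x)"
      using diff_chain_at[OF wd[unfolded has_vector_derivative_def] ld] .
    have e: "((\<lambda>h. G \<bullet> h) \<circ> (\<lambda>h. h *\<^sub>R (- G))) = (*) (- (G \<bullet> G))"
      by (auto simp: fun_eq_iff)
    have "((\<lambda>t. loss Phi f (w t)) has_real_derivative (- (G \<bullet> G))) (at x)"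
      unfolding has_field_derivative_def using ch[unfolded e] by (simp only: comp_def)
    then show ?thesis by auto
  qed
  then show ?thesis using DERIV_nonpos_imp_nonincreasing[OF st(2), of "\<lambda>t. loss Phi f (w t)"] by blast
qed

lemma gf_continuous:
  assumes gf: "gf_solution Phi f w"
  shows "continuous_on {0..} w"
proof -
  have "continuous (at x within {0..}) w" if "x \<in> {0..}" for x
  proof -
    have "x \<ge> 0" using that by simp
    then have "\<exists>G. (w has_vector_derivative (- G)) (at x within {0..})"
      using gf unfolding gf_solution_def by blast
    then obtain G where "(w has_vector_derivative (- G)) (at x within {0..})" by blast
    then show ?thesis by (rule has_vector_derivative_continuous)
  qed
  then show ?thesis using continuous_on_eq_continuous_within by blast
qed

lemma sin_model_eq: "sin_model a w = (\<chi> i. sin ((a *v w) $ i))"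
  by (simp add: sin_model_def matrix_vector_mult_def)

lemma learnable_in_range:
  fixes a :: "real^'w^'d"
  assumes "f \<in> GF_learnable (sin_model a)"
  shows "f \<in> range (sin_model a)"
proof -
  let ?P = "sin_model a"
  obtain w where gf: "gf_solution ?P f w" and inf0: "(INF t\<in>{0..}. loss ?P f (w t)) = 0"
    using assms unfolding GF_learnable_def by auto
  define phi where "phi t = loss ?P f (w t)" for t
  have phinn: "phi t \<ge> 0" for t unfolding phi_def loss_def by simp
  show ?thesis
  proof (cases "phi 0 = 0")
    case True
    then have "f = ?P (w 0)" unfolding phi_def loss_def by simp
    then show ?thesis by blast
  next
    case False
    then have p0: "phi 0 > 0" using phinn[of 0] by linarith
    have ev: "\<exists>T>0. \<forall>t\<ge>T. norm (f - ?P (w t)) < e" if e: "e > 0" for e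
    proof -
      have bdd: "bdd_below ((\<lambda>t. loss ?P f (w t)) ` {0..})"
        by (rule bdd_belowI[of _ 0]) (use phinn in \<open>auto simp: phi_def\<close>)
      have ne: "{0::real..} \<noteq> {}" by auto
      have "(INF t\<in>{0..}. loss ?P f (w t)) < min (e^2/2) (phi 0)"
        using inf0 p0 e by simp
      from iffD1[OF cINF_less_iff[OF ne bdd] this] obtain T where T: "T \<ge> 0" "phi T < min (e^2/2) (phi 0)"
        unfolding phi_def by auto
      then have Tp: "T > 0" by (cases "T = 0") auto
      have "norm (f - ?P (w t)) < e" if t: "t \<ge> T" for t
      proof -
        have "phi t \<le> phi T" unfolding phi_def using gf_monotone[OF gf Tp t] .
        then have "phi t < e^2/2" using T by linarith
        then have "(norm (f - ?P (w t)))^2 < e^2" unfolding phi_def loss_def by simp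
        then show ?thesis using e by (meson power_less_imp_less_base less_le_not_le e)
      qed
      then show ?thesis using Tp by blast
    qed
    define u where "u t = a *v w t" for t
    have ucont: "continuous_on {0..} u"
      unfolding u_def
      by (rule linear_continuous_on_compose[OF gf_continuous[OF gf]])
         (simp add: linear_linear)
    have Pu: "?P (w t) = (\<chi> i. sin (u t $ i))" for t unfolding u_def by (rule sin_model_eq)
    obtain T1 where T1: "T1 > 0" "\<forall>t\<ge>T1. norm (f - ?P (w t)) < 1" using ev[of 1] by auto
    have ubd: "\<bar>u t $ i\<bar> \<le> \<bar>u T1 $ i\<bar> + 2*pi" if t: "t \<ge> T1" for t i
    proof -
      have "continuous_on {T1..} (\<lambda>t. u t $ i)"
        using continuous_on_subset[OF ucont] T1 by (auto intro!: continuous_on_component)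
      moreover have "\<forall>t\<ge>T1. \<bar>sin (u t $ i) - f $ i\<bar> < 1"
      proof (intro allI impI)
        fix t assume "t \<ge> T1"
        then have "norm (f - ?P (w t)) < 1" using T1 by auto
        moreover have "\<bar>(f - ?P (w t)) $ i\<bar> \<le> norm (f - ?P (w t))" by (rule component_le_norm_cart)
        ultimately show "\<bar>sin (u t $ i) - f $ i\<bar> < 1" by (simp add: Pu abs_minus_commute)
      qed
      ultimately show ?thesis using sin_cont_bounded t by blast
    qed
    define R where "R = (\<Sum>i\<in>UNIV. \<bar>u T1 $ i\<bar> + 2*pi)"
    have unorm: "norm (u t) \<le> R" if "t \<ge> T1" for t
    proof -
      have "norm (u t) \<le> (\<Sum>i\<in>UNIV. \<bar>u t $ i\<bar>)" by (rule norm_le_l1_cart)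
      also have "\<dots> \<le> R" unfolding R_def by (rule sum_mono) (use ubd that in auto)
      finally show ?thesis .
    qed
    define S where "S = range (\<lambda>x. a *v x) \<inter> cball 0 R"
    have "closed (range (\<lambda>x. a *v x))"
      by (rule closed_subspace) (rule linear_subspace_image[OF matrix_vector_mul_linear subspace_UNIV])
    then have cS: "compact S" unfolding S_def
      by (simp add: compact_eq_bounded_closed closed_Int bounded_Int)
    define sg where "sg v = (\<chi> i. sin (v $ i))" for v :: "real^'d"
    have "continuous_on S sg" unfolding sg_def
      by (intro continuous_intros)
    then have "compact (sg ` S)" using cS compact_continuous_image by blast
    then have cl: "closed (sg ` S)" by (rule compact_imp_closed)
    have "f \<in> sg ` S"
    proof (rule closed_approachable[OF cl, THEN iffD1], intro allI impI)
      fix e :: real assume e: "e > 0"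
      obtain T where T: "T > 0" "\<forall>t\<ge>T. norm (f - ?P (w t)) < e" using ev[OF e] by auto
      define t where "t = max T T1"
      have "u t \<in> S" unfolding S_def u_def using unorm[of t] by (auto simp: t_def u_def)
      moreover have "dist (sg (u t)) f < e"
        using T(2)[rule_format, of t] by (simp add: t_def dist_norm norm_minus_commute Pu sg_def)
      ultimately show "\<exists>y\<in>sg ` S. dist y f < e" by blast
    qed
    then obtain x where "f = sg (a *v x)" unfolding S_def by auto
    then show ?thesis by (auto simp: sg_def sin_model_eq)
  qed
qed



lemma sin_row_differentiable:
  "(\<lambda>x::real^'w. sin (\<Sum>j\<in>UNIV. a $ k $ j * x $ j)) differentiable at x"
proof -
  have l: "bounded_linear (\<lambda>x::real^'w. \<Sum>j\<in>UNIV. a $ k $ j * x $ j)"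
    by (intro bounded_linear_sum) (rule bounded_linear_compose[OF bounded_linear_mult_right bounded_linear_vec_nth])
  have "((\<lambda>x::real^'w. \<Sum>j\<in>UNIV. a $ k $ j * x $ j) has_derivative (\<lambda>x::real^'w. \<Sum>j\<in>UNIV. a $ k $ j * x $ j)) (at x)"
    using l by (rule bounded_linear_imp_has_derivative)
  from diff_chain_at[OF this DERIV_sin[unfolded has_field_derivative_def]]
  show ?thesis unfolding differentiable_def o_def by blast
qed

lemma sin_model_differentiable:
  fixes a :: "real^'w^'d"
  shows "sin_model a differentiable_on UNIV"
  unfolding differentiable_on_def
proof
  fix x :: "real^'w"
  show "sin_model a differentiable at x within UNIV"
  proof (rule differentiable_componentwise_within[THEN iffD2], rule ballI)
    fix i :: "real^'d" assume "i \<in> Basis"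
    then obtain k where k: "i = axis k 1" unfolding Basis_vec_def by auto
    have eq: "(\<lambda>x. sin_model a x \<bullet> i) = (\<lambda>x. sin (\<Sum>j\<in>UNIV. a $ k $ j * x $ j))"
      by (simp add: k inner_axis sin_model_def)
    show "(\<lambda>x. sin_model a x \<bullet> i) differentiable at x within UNIV"
      unfolding eq by (rule sin_row_differentiable)
  qed
qed


theorem corollary2:
  fixes a :: "real^'w^'d"
  assumes "CARD('w) < CARD('d)"
  shows "GF_learnable (sin_model a) \<in> null_sets lebesgue"
proof -
  have "negligible (range (sin_model a))"
    by (rule negligible_differentiable_image_lowdim[OF _ sin_model_differentiable[of a]])
       (simp add: assms)
  then have "negligible (GF_learnable (sin_model a))"
    by (rule negligible_subset) (auto intro: learnable_in_range)
  then show ?thesis by (simp add: negligible_iff_null_sets)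
qed

end
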